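(* Let $\mathcal{T}_1=(V,\mathsf{p}_1)$ and $\mathcal{T}_2=(V,\mathsf{p}_2)$ be directed forests such that $\mathcal{T}_1$ is thinner than $\mathcal{T}_2$. Then: (a) $\mathrm{Chi}^{\langle k\rangle}_{\mathcal{T}_1}(v)\subseteq\mathrm{Chi}^{\langle k\rangle}_{\mathcal{T}_2}(v)$ for all $v\in V$ and $k\in\mathbb{N}$; (b) $\mathrm{root}(\mathcal{T}_1)\supseteq\mathrm{root}(\mathcal{T}_2)$; (c) every tree in $\mathcal{T}_1$ is contained in some tree in $\mathcal{T}_2$; in particular, the number of trees in $\mathcal{T}_2$ is less than or equal to the number of trees in $\mathcal{T}_1$; (d) every tree in $\mathcal{T}_2$ contains exactly one tree of $\mathcal{T}_1$ if and only if $\mathcal{T}_1=\mathcal{T}_2$; in particular, a directed forest strictly thinner than a directed tree is never a directed tree.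
   Context: A directed forest is a pair $\mathcal{T}=(V,\mathsf{p})$ where $V$ is a nonempty set and $\mathsf{p}\colon V\to V$ satisfies: if $n\in\mathbb{N}$, $v\in V$ and $\mathsf{p}^n(v)=v$, then $\mathsf{p}(v)=v$. Roots: $\mathrm{root}(\mathcal{T})=\{v:\mathsf{p}(v)=v\}$. For $k\in\mathbb{N}$, the $k$-th children of $v$ are $\mathrm{Chi}^{\langle k\rangle}_{\mathcal{T}}(v)=\{u\in V:\mathsf{p}^k(u)=v\neq\mathsf{p}^{k-1}(u)\}$ (with $\mathsf{p}^0=\mathrm{id}_V$). The trees of $\mathcal{T}$ are the connected components of the graph on $V$ with edges $\{\mathsf{p}(u),u\}$ for $u\notin\mathrm{root}(\mathcal{T})$ (equivalently, classes of $u\sim w$ iff $\mathsf{p}^m(u)=\mathsf{p}^n(w)$ for some $m,n\ge0$); a directed tree is a directed forest with exactly one tree. $\mathcal{T}_1$ is thinner than $\mathcal{T}_2$ if $\mathsf{p}_1(v)\in\{v,\mathsf{p}_2(v)\}$ for all $v\in V$; "strictly thinner" means thinner and different. *)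

theory Defs
  imports Main
begin

text \<open>A directed forest on the vertex set V (a subset of a type) with parent map p.
  Only the values of p on V matter; p must map V into V. Here N = {1,2,...}.\<close>
definition directed_forest :: "'a set \<Rightarrow> ('a \<Rightarrow> 'a) \<Rightarrow> bool" where
  "directed_forest V p \<longleftrightarrow> V \<noteq> {} \<and> (\<forall>v\<in>V. p v \<in> V) \<and>
     (\<forall>n::nat. \<forall>v\<in>V. n \<ge> 1 \<longrightarrow> (p ^^ n) v = v \<longrightarrow> p v = v)"

definition roots :: "'a set \<Rightarrow> ('a \<Rightarrow> 'a) \<Rightarrow> 'a set" where
  "roots V p = {v\<in>V. p v = v}"

text \<open>k-th children (meaningful for k >= 1).\<close>
definition chi :: "'a set \<Rightarrow> ('a \<Rightarrow> 'a) \<Rightarrow> nat \<Rightarrow> 'a \<Rightarrow> 'a set" where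
  "chi V p k v = {u\<in>V. (p ^^ k) u = v \<and> v \<noteq> (p ^^ (k - 1)) u}"

definition forest_edges :: "'a set \<Rightarrow> ('a \<Rightarrow> 'a) \<Rightarrow> ('a \<times> 'a) set" where
  "forest_edges V p = {(p u, u) | u. u \<in> V \<and> p u \<noteq> u} \<union> {(u, p u) | u. u \<in> V \<and> p u \<noteq> u}"

definition trees :: "'a set \<Rightarrow> ('a \<Rightarrow> 'a) \<Rightarrow> 'a set set" where
  "trees V p = {{w\<in>V. (u, w) \<in> (forest_edges V p)\<^sup>*} | u. u \<in> V}"

definition directed_tree :: "'a set \<Rightarrow> ('a \<Rightarrow> 'a) \<Rightarrow> bool" where
  "directed_tree V p \<longleftrightarrow> directed_forest V p \<and> (\<exists>!T. T \<in> trees V p)"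

definition thinner :: "'a set \<Rightarrow> ('a \<Rightarrow> 'a) \<Rightarrow> ('a \<Rightarrow> 'a) \<Rightarrow> bool" where
  "thinner V p1 p2 \<longleftrightarrow> (\<forall>v\<in>V. p1 v = v \<or> p1 v = p2 v)"

end

theory Submission
  imports Defs
begin

lemma fix_pow: "p x = x \<Longrightarrow> (p ^^ l) x = x"
  by (induction l) auto

lemma pow_in: "\<forall>v\<in>V. p v \<in> V \<Longrightarrow> x \<in> V \<Longrightarrow> (p ^^ l) x \<in> V"
  by (induction l) auto

lemma fe_sym: "sym (forest_edges V p)"
  unfolding forest_edges_def sym_def by blast

lemma rt_sym: "(u,w) \<in> (forest_edges V p)\<^sup>* \<Longrightarrow> (w,u) \<in> (forest_edges V p)\<^sup>*"
  by (meson symD sym_rtrancl fe_sym)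

lemma fe_mono: "thinner V p1 p2 \<Longrightarrow> forest_edges V p1 \<subseteq> forest_edges V p2"
  unfolding thinner_def forest_edges_def by force

lemma rt_anc: "(u,w) \<in> (forest_edges V p)\<^sup>* \<Longrightarrow> \<exists>m n. (p ^^ m) u = (p ^^ n) w"
proof (induction rule: rtrancl_induct)
  case base
  then show ?case by (rule exI[of _ 0], rule exI[of _ 0]) simp
next
  case (step x w)
  then obtain m n where mn: "(p ^^ m) u = (p ^^ n) x" by blast
  from step(2) have "x = p w \<or> w = p x" unfolding forest_edges_def by blast
  then show ?case
  proof
    assume "x = p w"
    then have "(p ^^ m) u = (p ^^ Suc n) w" using mn by (simp add: funpow_Suc_right del: funpow.simps)
    then show ?thesis by blast
  next
    assume "w = p x"
    then have "(p ^^ Suc m) u = (p ^^ n) w" using mn by (simp add: funpow_swap1)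
    then show ?thesis by blast
  qed
qed

lemma orbit12:
  assumes TH: "thinner V p1 p2" and M: "\<forall>v\<in>V. p2 v \<in> V" and w: "w \<in> V"
  shows "\<exists>j. (p1 ^^ m) w = (p2 ^^ j) w"
proof (induction m)
  case 0 show ?case by (rule exI[of _ 0]) simp
next
  case (Suc m)
  then obtain j where j: "(p1 ^^ m) w = (p2 ^^ j) w" by blast
  have inV: "(p2 ^^ j) w \<in> V" using pow_in[OF M w] .
  show ?case
  proof (cases "p1 ((p2 ^^ j) w) = (p2 ^^ j) w")
    case True then show ?thesis using j by (intro exI[of _ j]) simp
  next
    case False
    then have "p1 ((p2 ^^ j) w) = p2 ((p2 ^^ j) w)" using TH inV unfolding thinner_def by blast
    then show ?thesis using j by (intro exI[of _ "Suc j"]) simp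
  qed
qed

lemma chi_part:
  assumes TH: "thinner V p1 p2" and M: "\<forall>v\<in>V. p1 v \<in> V" and u: "u \<in> V"
    and ne: "(p1 ^^ k) u \<noteq> (p1 ^^ (k - 1)) u" and k: "k \<ge> 1"
  shows "\<forall>j\<le>k. (p1 ^^ j) u = (p2 ^^ j) u"
proof -
  have nr: "p1 ((p1 ^^ i) u) \<noteq> (p1 ^^ i) u" if "i < k" for i
  proof
    assume h: "p1 ((p1 ^^ i) u) = (p1 ^^ i) u"
    have e: "(p1 ^^ (l + i)) u = (p1 ^^ i) u" for l
      using fix_pow[of p1 "(p1 ^^ i) u" l, OF h] by (simp add: funpow_add)
    have "(p1 ^^ k) u = (p1 ^^ i) u" using e[of "k - i"] that by simp
    moreover have "(p1 ^^ (k-1)) u = (p1 ^^ i) u" using e[of "k - 1 - i"] that by simp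
    ultimately show False using ne by simp
  qed
  show ?thesis
  proof (intro allI impI)
    fix j assume "j \<le> k"
    then show "(p1 ^^ j) u = (p2 ^^ j) u"
    proof (induction j)
      case 0 then show ?case by simp
    next
      case (Suc j)
      then have IH: "(p1 ^^ j) u = (p2 ^^ j) u" by simp
      have inV: "(p1 ^^ j) u \<in> V" using pow_in[OF M u] .
      have "p1 ((p1 ^^ j) u) = p2 ((p1 ^^ j) u)" using nr[of j] Suc.prems TH inV
        unfolding thinner_def by auto
      then show ?case using IH by simp
    qed
  qed
qed


definition cmp :: "'a set \<Rightarrow> ('a \<Rightarrow> 'a) \<Rightarrow> 'a \<Rightarrow> 'a set" where
  "cmp V p u = {w\<in>V. (u, w) \<in> (forest_edges V p)\<^sup>*}"

lemma trees_cmp: "trees V p = cmp V p ` V"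
  unfolding trees_def cmp_def by auto

lemma cmp_self: "u \<in> V \<Longrightarrow> u \<in> cmp V p u"
  unfolding cmp_def by auto

lemma cmp_eq: "a \<in> cmp V p u \<Longrightarrow> cmp V p a = cmp V p u"
  unfolding cmp_def using rt_sym rtrancl_trans by fastforce

lemma cmp_mono: "thinner V p1 p2 \<Longrightarrow> cmp V p1 u \<subseteq> cmp V p2 u"
  unfolding cmp_def using rtrancl_mono[OF fe_mono] by blast

theorem lemma3p6:
  fixes V :: "'a set" and p1 p2 :: "'a \<Rightarrow> 'a"
  assumes F1: "directed_forest V p1" and F2: "directed_forest V p2"
    and TH: "thinner V p1 p2"
  shows "(\<forall>v\<in>V. \<forall>k::nat. k \<ge> 1 \<longrightarrow> chi V p1 k v \<subseteq> chi V p2 k v)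
    \<and> roots V p2 \<subseteq> roots V p1
    \<and> (\<forall>T1\<in>trees V p1. \<exists>T2\<in>trees V p2. T1 \<subseteq> T2)
    \<and> (\<exists>f. inj_on f (trees V p2) \<and> f ` trees V p2 \<subseteq> trees V p1)
    \<and> ((\<forall>T2\<in>trees V p2. \<exists>!T1. T1 \<in> trees V p1 \<and> T1 \<subseteq> T2) \<longleftrightarrow> (\<forall>v\<in>V. p1 v = p2 v))
    \<and> (directed_tree V p2 \<and> (\<exists>v\<in>V. p1 v \<noteq> p2 v) \<longrightarrow> \<not> directed_tree V p1)"
proof -
  have M1: "\<forall>v\<in>V. p1 v \<in> V" using F1 unfolding directed_forest_def by blast
  have M2: "\<forall>v\<in>V. p2 v \<in> V" using F2 unfolding directed_forest_def by blast
  have P2: "\<And>n v. v \<in> V \<Longrightarrow> n \<ge> 1 \<Longrightarrow> (p2 ^^ n) v = v \<Longrightarrow> p2 v = v"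
    using F2 unfolding directed_forest_def by blast
  have A: "\<forall>v\<in>V. \<forall>k::nat. k \<ge> 1 \<longrightarrow> chi V p1 k v \<subseteq> chi V p2 k v"
  proof (intro ballI allI impI subsetI)
    fix v k u assume k: "(1::nat) \<le> k" and u: "u \<in> chi V p1 k v"
    then have uV: "u \<in> V" and e1: "(p1 ^^ k) u = v" and e2: "v \<noteq> (p1 ^^ (k - 1)) u"
      unfolding chi_def by auto
    have "\<forall>j\<le>k. (p1 ^^ j) u = (p2 ^^ j) u"
      using chi_part[OF TH M1 uV _ k] e1 e2 by auto
    then have "(p1 ^^ k) u = (p2 ^^ k) u" "(p1 ^^ (k-1)) u = (p2 ^^ (k-1)) u" by auto
    then show "u \<in> chi V p2 k v" using uV e1 e2 unfolding chi_def by auto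
  qed
  have B: "roots V p2 \<subseteq> roots V p1"
    using TH unfolding roots_def thinner_def by auto
  have C: "\<forall>T1\<in>trees V p1. \<exists>T2\<in>trees V p2. T1 \<subseteq> T2"
    unfolding trees_cmp using cmp_mono[OF TH] by blast
  define g where "g T = cmp V p1 (SOME a. a \<in> T)" for T
  have gsub: "g T \<subseteq> T \<and> g T \<in> trees V p1 \<and> g T \<noteq> {}" if TT: "T \<in> trees V p2" for T
  proof -
    obtain u where u: "u \<in> V" "T = cmp V p2 u" using TT unfolding trees_cmp by blast
    then have "\<exists>a. a \<in> T" using cmp_self[of u V p2] by auto
    then have a: "(SOME a. a \<in> T) \<in> T" by (rule someI_ex)
    then have aV: "(SOME a. a \<in> T) \<in> V" using u by (simp add: cmp_def)
    have "g T \<subseteq> cmp V p2 (SOME a. a \<in> T)" unfolding g_def using cmp_mono[OF TH] .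
    also have "\<dots> = T" using cmp_eq[of "SOME a. a \<in> T" V p2 u] a u by simp
    finally have g1: "g T \<subseteq> T" .
    have g2: "(SOME a. a \<in> T) \<in> g T" unfolding g_def using cmp_self[OF aV] .
    have g3: "g T \<in> trees V p1" unfolding g_def trees_cmp using aV by simp
    show ?thesis using g1 g2 g3 by auto
  qed
  have disj: "T = T'" if TT: "T \<in> trees V p \<and> T' \<in> trees V p \<and> x \<in> T \<and> x \<in> T'" for T T' x and p :: "'a \<Rightarrow> 'a"
  proof -
    obtain u u' where "T = cmp V p u" "T' = cmp V p u'" using TT unfolding trees_cmp by blast
    then have "cmp V p x = T" "cmp V p x = T'" using cmp_eq[of x V p u] cmp_eq[of x V p u'] TT by auto
    then show ?thesis by simp
  qed
  have D: "\<exists>f. inj_on f (trees V p2) \<and> f ` trees V p2 \<subseteq> trees V p1"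
  proof (intro exI conjI)
    show "inj_on g (trees V p2)"
    proof (rule inj_onI)
      fix T T' assume T: "T \<in> trees V p2" and T': "T' \<in> trees V p2" and eq: "g T = g T'"
      obtain x where "x \<in> g T" using gsub[OF T] by blast
      then have "x \<in> T" "x \<in> T'" using gsub[OF T] gsub[OF T'] eq by auto
      then show "T = T'" using disj T T' by blast
    qed
    show "g ` trees V p2 \<subseteq> trees V p1" using gsub by blast
  qed
  have E: "(\<forall>T2\<in>trees V p2. \<exists>!T1. T1 \<in> trees V p1 \<and> T1 \<subseteq> T2) \<longleftrightarrow> (\<forall>v\<in>V. p1 v = p2 v)"
  proof
    assume H: "\<forall>T2\<in>trees V p2. \<exists>!T1. T1 \<in> trees V p1 \<and> T1 \<subseteq> T2"
    show "\<forall>v\<in>V. p1 v = p2 v"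
    proof (rule ccontr)
      assume "\<not> (\<forall>v\<in>V. p1 v = p2 v)"
      then obtain v where v: "v \<in> V" "p1 v \<noteq> p2 v" by blast
      then have r1: "p1 v = v" and r2: "p2 v \<noteq> v" using TH unfolding thinner_def by auto
      have wV: "p2 v \<in> V" using M2 v by blast
      have notin: "p2 v \<notin> cmp V p1 v"
      proof
        assume "p2 v \<in> cmp V p1 v"
        then have "(v, p2 v) \<in> (forest_edges V p1)\<^sup>*" by (simp add: cmp_def)
        then have "(p2 v, v) \<in> (forest_edges V p1)\<^sup>*" by (rule rt_sym)
        then obtain m n where "(p1 ^^ m) (p2 v) = (p1 ^^ n) v" using rt_anc[of "p2 v" v V p1] by blast
        then have mv: "(p1 ^^ m) (p2 v) = v" using fix_pow[of p1 v, OF r1] by simp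
        obtain j where "(p1 ^^ m) (p2 v) = (p2 ^^ j) (p2 v)" using orbit12[OF TH M2 wV] by blast
        then have "(p2 ^^ Suc j) v = v" using mv by (simp add: funpow_Suc_right del: funpow.simps)
        then show False using P2[OF v(1), of "Suc j"] r2 by simp
      qed
      have "(v, p2 v) \<in> {(u, p2 u) | u. u \<in> V \<and> p2 u \<noteq> u}" using v(1) r2 by blast
      then have edge: "(v, p2 v) \<in> forest_edges V p2" unfolding forest_edges_def by (rule UnI2)
      have T2: "cmp V p2 v \<in> trees V p2" using v unfolding trees_cmp by blast
      have s1: "cmp V p1 v \<subseteq> cmp V p2 v" using cmp_mono[OF TH] .
      have "p2 v \<in> cmp V p2 v" using edge wV by (simp add: cmp_def r_into_rtrancl)
      then have s2: "cmp V p1 (p2 v) \<subseteq> cmp V p2 v" using cmp_mono[OF TH, of "p2 v"] cmp_eq[of "p2 v" V p2 v] by simp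
      have "cmp V p1 v \<noteq> cmp V p1 (p2 v)" using notin cmp_self[OF wV] by auto
      moreover have "cmp V p1 v \<in> trees V p1" "cmp V p1 (p2 v) \<in> trees V p1"
        using v wV unfolding trees_cmp by auto
      moreover have "\<exists>!T1. T1 \<in> trees V p1 \<and> T1 \<subseteq> cmp V p2 v" using bspec[OF H T2] .
      ultimately show False using s1 s2 by blast
    qed
  next
    assume H: "\<forall>v\<in>V. p1 v = p2 v"
    then have "forest_edges V p1 = forest_edges V p2" unfolding forest_edges_def
      by (smt (verit) Collect_cong)
    then have teq: "trees V p1 = trees V p2" unfolding trees_def by simp
    show "\<forall>T2\<in>trees V p2. \<exists>!T1. T1 \<in> trees V p1 \<and> T1 \<subseteq> T2"
    proof
      fix T2 assume T2: "T2 \<in> trees V p2"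
      show "\<exists>!T1. T1 \<in> trees V p1 \<and> T1 \<subseteq> T2"
      proof (rule ex1I[of _ T2])
        show "T2 \<in> trees V p1 \<and> T2 \<subseteq> T2" using T2 teq by simp
      next
        fix T1 assume h: "T1 \<in> trees V p1 \<and> T1 \<subseteq> T2"
        then obtain u where "u \<in> V" "T1 = cmp V p1 u" by (auto simp: trees_cmp)
        then have "u \<in> T1" using cmp_self by metis
        then show "T1 = T2" using disj[of T1 p2 T2 u] h teq T2 by blast
      qed
    qed
  qed
  have G: "directed_tree V p2 \<and> (\<exists>v\<in>V. p1 v \<noteq> p2 v) \<longrightarrow> \<not> directed_tree V p1"
  proof (intro impI notI)
    assume h: "directed_tree V p2 \<and> (\<exists>v\<in>V. p1 v \<noteq> p2 v)" and t1: "directed_tree V p1"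
    obtain T1 where T1: "T1 \<in> trees V p1" "\<And>T. T \<in> trees V p1 \<Longrightarrow> T = T1"
      using t1 by (auto simp: directed_tree_def)
    obtain T2 where T2: "T2 \<in> trees V p2" "\<And>T. T \<in> trees V p2 \<Longrightarrow> T = T2"
      using h by (auto simp: directed_tree_def)
    have "T1 \<subseteq> T2" using C T1 T2 by blast
    then have "\<forall>T2\<in>trees V p2. \<exists>!T1. T1 \<in> trees V p1 \<and> T1 \<subseteq> T2" using T1 T2 by blast
    then show False using E h by blast
  qed
  show ?thesis using A B C D E G by blast
qed

end
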